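(* Let $0\le d<r\le\min\{m,n\}$ and $\mathcal{R}\in\mathcal{Z}_{n,m,d}$. Then \[\mathfrak{m}(\mathcal{R})\equiv\frac{1}{r-d}\sum_{\mathcal{R}'}\mathfrak{m}(\mathcal{R}')\pmod{\mathbf{I}(\mathcal{Z}_{n,m,r})},\] where the sum runs over all rook placements $\mathcal{R}'\supseteq\mathcal{R}$ with $|\mathcal{R}'|=d+1$.
   Context: Fix positive integers $n,m$. $\mathbb{C}[\mathbf{x}_{n\times m}]$ is the polynomial ring in variables $x_{i,j}$ ($1\le i\le n,1\le j\le m$). A rook placement on the $n\times m$ board is a subset $\mathcal{R}\subseteq[n]\times[m]$ with at most one element in each row and column, identified with its $0/1$ matrix in $\mathrm{Mat}_{n\times m}(\mathbb{C})$; $\mathcal{Z}_{n,m,d}$ is the set of rook placements with exactly $d$ elements; $\mathfrak{m}(\mathcal{R}):=\prod_{(i,j)\in\mathcal{R}}x_{i,j}$. $\mathbf{I}(\mathcal{Z})$ is the ideal of polynomials vanishing on the finite set $\mathcal{Z}$. *)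

theory Defs
  imports Complex_Main
begin

(* A point of Mat_{n x m}(C) is represented as a function (i,j) |-> entry;
   polynomials in C[x_{i,j}] are represented by the polynomial functions they
   induce on such points (C is infinite, so this loses nothing). *)
type_synonym point = "nat \<times> nat \<Rightarrow> complex"

definition rook_placement :: "nat \<Rightarrow> nat \<Rightarrow> (nat \<times> nat) set \<Rightarrow> bool" where
  "rook_placement n m R \<longleftrightarrow>
     R \<subseteq> {1..n} \<times> {1..m} \<and>
     (\<forall>i j i' j'. (i, j) \<in> R \<longrightarrow> (i', j') \<in> R \<longrightarrow> (i = i' \<longleftrightarrow> j = j'))"

definition Z :: "nat \<Rightarrow> nat \<Rightarrow> nat \<Rightarrow> (nat \<times> nat) set set" where
  "Z n m d = {R. rook_placement n m R \<and> card R = d}"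

definition rook_matrix :: "(nat \<times> nat) set \<Rightarrow> point" where
  "rook_matrix R = (\<lambda>p. if p \<in> R then 1 else 0)"

definition rook_monomial :: "(nat \<times> nat) set \<Rightarrow> point \<Rightarrow> complex" where
  "rook_monomial R = (\<lambda>X. \<Prod>p\<in>R. X p)"

definition vanishing_ideal :: "point set \<Rightarrow> (point \<Rightarrow> complex) set" where
  "vanishing_ideal S = {f. \<forall>x\<in>S. f x = 0}"

end

theory Submission
  imports Defs
begin

lemma rp_subset: "rook_placement n m S \<Longrightarrow> A \<subseteq> S \<Longrightarrow> rook_placement n m A"
  unfolding rook_placement_def by blast

lemma rp_finite: "rook_placement n m S \<Longrightarrow> finite S"
  unfolding rook_placement_def by (meson finite_SigmaI finite_atLeastAtMost finite_subset)

lemma mono_eval: "finite A \<Longrightarrow> rook_monomial A (rook_matrix S) = (if A \<subseteq> S then 1 else 0)"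
  unfolding rook_monomial_def rook_matrix_def
proof (induction A rule: finite_induct)
  case empty then show ?case by simp
next
  case (insert x F) then show ?case by auto
qed

theorem mainTheorem9:
  fixes n m d r :: nat and R :: "(nat \<times> nat) set"
  assumes "d < r" and "r \<le> min m n" and "R \<in> Z n m d"
  shows "(\<lambda>X. rook_monomial R X
            - (1 / of_nat (r - d)) *
              (\<Sum>R'\<in>{R'. rook_placement n m R' \<and> R \<subseteq> R' \<and> card R' = d + 1}.
                 rook_monomial R' X))
         \<in> vanishing_ideal (rook_matrix ` Z n m r)"
  unfolding vanishing_ideal_def
proof (clarify)
  fix S assume "S \<in> Z n m r"
  hence Srp: "rook_placement n m S" and cS: "card S = r" by (auto simp: Z_def)
  have fS: "finite S" using rp_finite[OF Srp] .
  from assms(3) have Rrp: "rook_placement n m R" and cR: "card R = d" by (auto simp: Z_def)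
  have fR: "finite R" using rp_finite[OF Rrp] .
  let ?T = "{R'. rook_placement n m R' \<and> R \<subseteq> R' \<and> card R' = d + 1}"
  have fT: "finite ?T"
  proof -
    have "?T \<subseteq> Pow ({1..n} \<times> {1..m})" by (auto simp: rook_placement_def)
    thus ?thesis by (rule finite_subset) simp
  qed
  have sumeq: "(\<Sum>R'\<in>?T. rook_monomial R' (rook_matrix S))
      = (\<Sum>R'\<in>?T. if R' \<subseteq> S then 1 else 0)"
    by (rule sum.cong) (use mono_eval rp_finite in blast)+
  show "rook_monomial R (rook_matrix S) - 1 / of_nat (r - d) *
          (\<Sum>R'\<in>?T. rook_monomial R' (rook_matrix S)) = 0"
  proof (cases "R \<subseteq> S")
    case False
    have "(\<Sum>R'\<in>?T. if R' \<subseteq> S then (1::complex) else 0) = 0"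
      by (rule sum.neutral) (use False in auto)
    thus ?thesis using sumeq mono_eval[OF fR] False by simp
  next
    case True
    have seteq: "{R'\<in>?T. R' \<subseteq> S} = (\<lambda>p. insert p R) ` (S - R)"
    proof
      show "{R'\<in>?T. R' \<subseteq> S} \<subseteq> (\<lambda>p. insert p R) ` (S - R)"
      proof clarify
        fix R' assume h: "rook_placement n m R'" "R \<subseteq> R'" "card R' = d + 1" "R' \<subseteq> S"
        have fR': "finite R'" using rp_finite[OF h(1)] .
        have "card (R' - R) = 1" using h cR fR' fR by (simp add: card_Diff_subset)
        then obtain p where p: "R' - R = {p}" by (auto simp: card_Suc_eq)
        hence "R' = insert p R" using h(2) by blast
        moreover have "p \<in> S - R" using p h(4) by blast
        ultimately show "R' \<in> (\<lambda>p. insert p R) ` (S - R)" by blast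
      qed
      show "(\<lambda>p. insert p R) ` (S - R) \<subseteq> {R'\<in>?T. R' \<subseteq> S}"
      proof
        fix X assume "X \<in> (\<lambda>p. insert p R) ` (S - R)"
        then obtain p where p: "p \<in> S" "p \<notin> R" and X: "X = insert p R" by blast
        have "insert p R \<subseteq> S" using p True by blast
        thus "X \<in> {R'\<in>?T. R' \<subseteq> S}"
          using rp_subset[OF Srp] p fR cR X by auto
      qed
    qed
    have inj: "inj_on (\<lambda>p. insert p R) (S - R)"
      by (rule inj_onI) blast
    have cnt: "card {R'\<in>?T. R' \<subseteq> S} = r - d"
      unfolding seteq card_image[OF inj] using True cS cR fR by (simp add: card_Diff_subset)
    have "(\<Sum>R'\<in>?T. if R' \<subseteq> S then (1::complex) else 0) = of_nat (card {R'\<in>?T. R' \<subseteq> S})"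
      using fT by (simp add: sum.If_cases Int_def conj_assoc)
    hence "(\<Sum>R'\<in>?T. rook_monomial R' (rook_matrix S)) = of_nat (r - d)"
      using sumeq cnt by simp
    moreover have "of_nat (r - d) \<noteq> (0::complex)" using assms(1) by simp
    ultimately show ?thesis using mono_eval[OF fR] True by simp
  qed
qed

end
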